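(* Let $p$ be a prime and $M\in\mathrm{GL}(2,\mathbb{F}_p)$. Then $M$ is reversible within $\mathrm{GL}(2,\mathbb{F}_p)$ if and only if $M^2=\mathbb{1}$ or $\det(M)=1$. Whenever $M^2=\mathbb{1}$, one has $\mathcal{R}(M)=\mathcal{S}(M)$. If $\det(M)=1$ and $M^2\neq\mathbb{1}$, there exists an involutory reversor, and $\mathcal{R}(M)=\mathcal{S}(M)\rtimes C_2$.
   Context: $M$ is reversible within a group $\mathcal{G}$ if there is $G\in\mathcal{G}$ with $GMG^{-1}=M^{-1}$; such $G$ is a reversor. With $\mathcal{G}=\mathrm{GL}(2,\mathbb{F}_p)$: $\mathcal{S}(M)=\{G\in\mathcal{G}: GMG^{-1}=M\}$ (symmetry group) and $\mathcal{R}(M)=\{G\in\mathcal{G}: GMG^{-1}=M^{\pm1}\}$ (reversing symmetry group). $C_2$ is the cyclic group of order 2 (generated by an involutory reversor). *)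

theory Defs
  imports "HOL-Analysis.Analysis"
begin

text \<open>GL(2,F) for a field F: invertible 2x2 matrices over F.
  F_p is rendered as a finite field type 'a of prime cardinality p.\<close>

definition GL2 :: "('a::field ^ 2 ^ 2) set" where
  "GL2 = {G. invertible G}"

definition reversible_in :: "('a::field ^ 2 ^ 2) set \<Rightarrow> 'a ^ 2 ^ 2 \<Rightarrow> bool" where
  "reversible_in \<G> M \<longleftrightarrow> (\<exists>G\<in>\<G>. G ** M ** matrix_inv G = matrix_inv M)"

definition sym_group :: "('a::field ^ 2 ^ 2) \<Rightarrow> ('a ^ 2 ^ 2) set" where
  "sym_group M = {G \<in> GL2. G ** M ** matrix_inv G = M}"

definition rev_group :: "('a::field ^ 2 ^ 2) \<Rightarrow> ('a ^ 2 ^ 2) set" where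
  "rev_group M = {G \<in> GL2. G ** M ** matrix_inv G = M \<or> G ** M ** matrix_inv G = matrix_inv M}"

text \<open>Internal semidirect product R = S \<rtimes> \<langle>T\<rangle> with \<langle>T\<rangle> \<cong> C_2:
  T has order 2, S is normal in R, S \<inter> {1,T} = {1}, and R = S \<cdot> {1,T}.\<close>
definition semidirect_C2 :: "('a::field ^ 2 ^ 2) set \<Rightarrow> ('a ^ 2 ^ 2) set \<Rightarrow> 'a ^ 2 ^ 2 \<Rightarrow> bool" where
  "semidirect_C2 R S T \<longleftrightarrow>
     T ** T = mat 1 \<and> T \<noteq> mat 1 \<and> T \<in> R \<and>
     (\<forall>g\<in>R. \<forall>s\<in>S. g ** s ** matrix_inv g \<in> S) \<and>
     S \<inter> {mat 1, T} = {mat 1} \<and>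
     R = {s ** h | s h. s \<in> S \<and> h \<in> {mat 1, T}}"

end

theory Submission imports Defs begin


lemma m2_eq: "(A::'a^2^2) = B \<longleftrightarrow> A$1$1 = B$1$1 \<and> A$1$2 = B$1$2 \<and> A$2$1 = B$2$1 \<and> A$2$2 = B$2$2"
  by (auto simp: vec_eq_iff forall_2)

lemma m2_mult: "((A::'a::semiring_1^2^2) ** B)$i$j = A$i$1*B$1$j + A$i$2*B$2$j"
  by (simp add: matrix_matrix_mult_def sum_2)

lemma m2_mat: "(mat x :: 'a::zero^2^2)$1$1 = x" "(mat x :: 'a::zero^2^2)$2$2 = x"
   "(mat x :: 'a::zero^2^2)$1$2 = 0" "(mat x :: 'a::zero^2^2)$2$1 = 0"
  by (simp_all add: mat_def)

definition inv2 :: "'a::field^2^2 \<Rightarrow> 'a^2^2" where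
 "inv2 M = (\<chi> i j. (if i = 1 then (if j = 1 then M$2$2 else - M$1$2) else (if j = 1 then - M$2$1 else M$1$1)) / det M)"

lemma inv2_c[simp]: "inv2 M $1$1 = M$2$2 / det M" "inv2 M $1$2 = - M$1$2 / det M" "inv2 M $2$1 = - M$2$1 / det M" "inv2 M $2$2 = M$1$1 / det M"
  by (simp_all add: inv2_def)

lemma inv_lr: fixes A :: "'a::field^'n^'n" assumes "invertible A"
  shows "A ** matrix_inv A = mat 1" "matrix_inv A ** A = mat 1"
  using someI_ex[OF assms[unfolded invertible_def]] by (auto simp: matrix_inv_def)

lemma inv_unique: fixes A B :: "'a::field^'n^'n" assumes "A ** B = mat 1"
  shows "matrix_inv A = B"
proof -
  have i: "invertible A" using assms invertible_right_inverse by blast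
  have "matrix_inv A = matrix_inv A ** (A ** B)" using assms by simp
  also have "\<dots> = B" using inv_lr(2)[OF i] by (simp add: matrix_mul_assoc)
  finally show ?thesis .
qed

lemma inv2: fixes M :: "'a::field^2^2" assumes "det M \<noteq> 0"
  shows "matrix_inv M = inv2 M"
  apply (rule inv_unique)
  using assms by (simp add: det_2 m2_eq m2_mult m2_mat  add_divide_distrib[symmetric] diff_divide_distrib[symmetric] mult.commute)


lemma conj_iff: fixes G M N :: "'a::field^'n^'n" assumes "invertible G"
  shows "G ** M ** matrix_inv G = N \<longleftrightarrow> G ** M = N ** G"
proof
  assume h: "G ** M ** matrix_inv G = N"
  have "G ** M = G ** M ** (matrix_inv G ** G)" using inv_lr(2)[OF assms] by simp
  also have "\<dots> = N ** G" using h by (simp add: matrix_mul_assoc)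
  finally show "G ** M = N ** G" .
next
  assume h: "G ** M = N ** G"
  have "G ** M ** matrix_inv G = N ** (G ** matrix_inv G)" using h by (simp add: matrix_mul_assoc)
  also have "\<dots> = N" using inv_lr(1)[OF assms] by simp
  finally show "G ** M ** matrix_inv G = N" .
qed

lemma trace2: "trace (A::'a::comm_semiring_1^2^2) = A$1$1 + A$2$2"
  by (simp add: trace_def sum_2)

lemma alg_fwd: fixes a b c d :: "'a::field"
  assumes D: "a*d - b*c \<noteq> 0" and dd: "(a*d-b*c) * (a*d-b*c) = 1"
    and tr: "(d+a)/(a*d-b*c) = a + d" and n1: "a*d - b*c \<noteq> 1"
  shows "a+d = 0" "a*a+b*c = 1"
proof -
  define D where "D = a*d-b*c"
  have "(D - 1) * (D + 1) = 0" using dd unfolding D_def by (simp add: algebra_simps)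
  hence Dm: "D = -1" using n1 unfolding D_def by (simp add: eq_neg_iff_add_eq_0)
  have "-(a+d) = a+d" using tr Dm unfolding D_def by (simp add: add.commute)
  hence "2 * (a+d) = 0" by (simp add: algebra_simps)
  moreover have "(2::'a) \<noteq> 0"
  proof
    assume "(2::'a) = 0" hence "(-1::'a) = 1" by (metis add_eq_0_iff one_add_one)
    thus False using Dm n1 unfolding D_def by simp
  qed
  ultimately show s: "a+d = 0" by (metis mult_eq_0_iff)
  hence "d = -a" by (simp add: eq_neg_iff_add_eq_0 add.commute)
  thus "a*a+b*c = 1" using Dm unfolding D_def by (simp add: algebra_simps)
qed

lemma rev_fwd: fixes M G :: "'a::field^2^2"
  assumes M: "invertible M" and G: "invertible G" and h: "G ** M ** matrix_inv G = matrix_inv M"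
  shows "M ** M = mat 1 \<or> det M = 1"
proof (rule disjCI)
  assume n1: "det M \<noteq> 1"
  have dM: "det M \<noteq> 0" using M invertible_det_nz by blast
  have dG: "det G \<noteq> 0" using G invertible_det_nz by blast
  have "det (G ** M) = det (matrix_inv M ** G)" using h conj_iff[OF G] by simp
  hence "det M = det (matrix_inv M)" using dG by (simp add: det_mul)
  moreover have "det M * det (matrix_inv M) = 1" using inv_lr(1)[OF M] by (metis det_I det_mul)
  ultimately have dd: "det M * det M = 1" by simp
  have "trace (matrix_inv M) = trace (G ** M ** matrix_inv G)" using h by simp
  also have "\<dots> = trace (matrix_inv G ** G ** M)"
    by (metis matrix_mul_assoc trace_mul_sym)
  also have "\<dots> = trace M" using inv_lr(2)[OF G] by simp
  finally have tr: "trace (inv2 M) = trace M" using inv2[OF dM] by simp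
  have "M$1$1 + M$2$2 = 0" "M$1$1*M$1$1 + M$1$2*M$2$1 = 1"
    using alg_fwd[of "M$1$1" "M$2$2" "M$1$2" "M$2$1"] dM dd tr n1
    by (simp_all add: det_2 trace2 add_divide_distrib[symmetric] add.commute)
  hence "M$2$2 = - M$1$1" "M$1$1*M$1$1 + M$1$2*M$2$1 = 1" by (simp_all add: eq_neg_iff_add_eq_0 add.commute)
  thus "M ** M = mat 1"
    by (simp add: m2_eq m2_mult m2_mat algebra_simps)
qed


definition mk2 :: "'a \<Rightarrow> 'a \<Rightarrow> 'a \<Rightarrow> 'a \<Rightarrow> 'a^2^2" where
  "mk2 x y z w = (\<chi> i j. if i = 1 then (if j = 1 then x else y) else (if j = 1 then z else w))"

lemma mk2_c[simp]: "mk2 x y z w $1$1 = x" "mk2 x y z w $1$2 = y" "mk2 x y z w $2$1 = z" "mk2 x y z w $2$2 = w"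
  by (simp_all add: mk2_def)

lemma exists_T: fixes M :: "'a::field^2^2" assumes d: "det M = 1"
  shows "\<exists>T. T ** T = mat 1 \<and> T ** M = inv2 M ** T"
proof -
  have d': "M$1$1*M$2$2 - M$1$2*M$2$1 = 1" using d by (simp add: det_2)
  show ?thesis
  proof (cases "M$2$1 = 0")
    case False
    let ?T = "mk2 1 ((M$2$2 - M$1$1)/M$2$1) 0 (-1) :: 'a^2^2"
    have "?T ** ?T = mat 1 \<and> ?T ** M = inv2 M ** ?T" using False d
      by (simp add: m2_eq m2_mult m2_mat field_simps)
    thus ?thesis by blast
  next
    case c0: True
    show ?thesis
    proof (cases "M$1$2 = 0")
      case False
      let ?T = "mk2 1 0 ((M$2$2 - M$1$1)/M$1$2) (-1) :: 'a^2^2"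
      have "?T ** ?T = mat 1 \<and> ?T ** M = inv2 M ** ?T" using False c0 d
        by (simp add: m2_eq m2_mult m2_mat field_simps)
      thus ?thesis by blast
    next
      case True
      let ?T = "mk2 0 1 1 0 :: 'a^2^2"
      have "?T ** ?T = mat 1 \<and> ?T ** M = inv2 M ** ?T" using True c0 d
        by (simp add: m2_eq m2_mult m2_mat)
      thus ?thesis by blast
    qed
  qed
qed


lemma inv_I: "invertible (mat 1 :: 'a::field^'n^'n)"
  unfolding invertible_def by (rule exI[of _ "mat 1"]) simp

lemma minv_I: "matrix_inv (mat 1 :: 'a::field^'n^'n) = mat 1"
  by (rule inv_unique) simp

lemma inv_inv: fixes g :: "'a::field^'n^'n" assumes "invertible g"
  shows "invertible (matrix_inv g)"
  unfolding invertible_def using inv_lr[OF assms] by blast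

lemma conj_back: fixes g A B :: "'a::field^'n^'n" assumes g: "invertible g" and h: "A ** g = g ** B"
  shows "matrix_inv g ** A = B ** matrix_inv g"
proof -
  have "matrix_inv g ** A = matrix_inv g ** A ** (g ** matrix_inv g)" using inv_lr(1)[OF g] by simp
  also have "\<dots> = matrix_inv g ** (A ** g) ** matrix_inv g" by (simp add: matrix_mul_assoc)
  also have "\<dots> = (matrix_inv g ** g) ** B ** matrix_inv g" using h by (simp add: matrix_mul_assoc)
  also have "\<dots> = B ** matrix_inv g" using inv_lr(2)[OF g] by simp
  finally show ?thesis .
qed

lemma swap: fixes g M :: "'a::field^'n^'n" assumes M: "invertible M" and h: "g ** M = matrix_inv M ** g"
  shows "M ** g = g ** matrix_inv M"
proof -
  have "M ** g = M ** g ** (M ** matrix_inv M)" using inv_lr(1)[OF M] by simp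
  also have "\<dots> = M ** (g ** M) ** matrix_inv M" by (simp add: matrix_mul_assoc)
  also have "\<dots> = (M ** matrix_inv M) ** g ** matrix_inv M" using h by (simp add: matrix_mul_assoc)
  also have "\<dots> = g ** matrix_inv M" using inv_lr(1)[OF M] by simp
  finally show ?thesis .
qed

lemma inv_comm: fixes s M :: "'a::field^'n^'n" assumes M: "invertible M" and h: "s ** M = M ** s"
  shows "s ** matrix_inv M = matrix_inv M ** s"
  using conj_back[OF M h] by simp

lemma assoc_ext: fixes A B C X :: "'a::field^'n^'n" shows "A ** B = C \<Longrightarrow> X ** A ** B = X ** C"
  by (simp add: matrix_mul_assoc[symmetric])

theorem theorem4p4:
  fixes M :: "'a::{field,finite} ^ 2 ^ 2"
  assumes "prime CARD('a)"
    and "M \<in> GL2"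
  shows "(reversible_in GL2 M \<longleftrightarrow> (M ** M = mat 1 \<or> det M = 1))
       \<and> (M ** M = mat 1 \<longrightarrow> rev_group M = sym_group M)
       \<and> (det M = 1 \<and> M ** M \<noteq> mat 1 \<longrightarrow>
            (\<exists>T. T \<in> GL2 \<and> T ** T = mat 1 \<and> T ** M ** matrix_inv T = matrix_inv M \<and>
                 semidirect_C2 (rev_group M) (sym_group M) T))"
proof -
  have Mi: "invertible M" using assms(2) by (simp add: GL2_def)
  have dM: "det M \<noteq> 0" using Mi invertible_det_nz by blast
  let ?Mi = "matrix_inv M"
  have R_iff: "G \<in> rev_group M \<longleftrightarrow> invertible G \<and> (G ** M = M ** G \<or> G ** M = ?Mi ** G)" for G
    unfolding rev_group_def GL2_def using conj_iff[of G] by auto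
  have S_iff: "G \<in> sym_group M \<longleftrightarrow> invertible G \<and> G ** M = M ** G" for G
    unfolding sym_group_def GL2_def using conj_iff[of G] by auto
  have sq_inv: "?Mi = M" if "M ** M = mat 1" using inv_unique[OF that] .
  have T_ex: "\<exists>T. invertible T \<and> T ** T = mat 1 \<and> T ** M = ?Mi ** T" if d1: "det M = 1"
  proof -
    obtain T where T: "T ** T = mat 1" "T ** M = inv2 M ** T" using exists_T[OF d1] by blast
    have "invertible T" using T(1) invertible_right_inverse by blast
    thus ?thesis using T inv2[OF dM] by auto
  qed
  have P1: "reversible_in GL2 M \<longleftrightarrow> (M ** M = mat 1 \<or> det M = 1)"
  proof
    assume "reversible_in GL2 M"
    then obtain G where "invertible G" "G ** M ** matrix_inv G = ?Mi"
      unfolding reversible_in_def GL2_def by auto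
    thus "M ** M = mat 1 \<or> det M = 1" using rev_fwd Mi by blast
  next
    assume h: "M ** M = mat 1 \<or> det M = 1"
    show "reversible_in GL2 M"
    proof (cases "M ** M = mat 1")
      case True
      thus ?thesis unfolding reversible_in_def GL2_def
        using sq_inv inv_I by (intro bexI[of _ "mat 1"]) (auto simp: minv_I)
    next
      case False
      then obtain T where "invertible T" "T ** M = ?Mi ** T" using h T_ex by blast
      thus ?thesis unfolding reversible_in_def GL2_def using conj_iff by blast
    qed
  qed
  have P2: "M ** M = mat 1 \<longrightarrow> rev_group M = sym_group M"
    using sq_inv unfolding rev_group_def sym_group_def by auto
  have P3: "\<exists>T. T \<in> GL2 \<and> T ** T = mat 1 \<and> T ** M ** matrix_inv T = matrix_inv M \<and>
                 semidirect_C2 (rev_group M) (sym_group M) T" if h: "det M = 1" "M ** M \<noteq> mat 1"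
  proof -
    obtain T where T: "invertible T" "T ** T = mat 1" "T ** M = ?Mi ** T" using T_ex h by blast
    have MnMi: "M \<noteq> ?Mi" using h(2) inv_lr(1)[OF Mi] by metis
    have TnS: "T \<notin> sym_group M"
    proof
      assume "T \<in> sym_group M"
      hence "?Mi ** T = M ** T" using T S_iff by auto
      hence "?Mi ** (T ** T) = M ** (T ** T)" by (simp add: matrix_mul_assoc)
      thus False using T(2) MnMi by simp
    qed
    have Tinv: "matrix_inv T = T" using inv_unique[OF T(2)] .
    have MT: "M ** T = T ** ?Mi" using swap[OF Mi T(3)] .
    have I_S: "mat 1 \<in> sym_group M" using S_iff inv_I by simp
    have TnI: "T \<noteq> mat 1" using TnS I_S by auto
    have TR: "T \<in> rev_group M" using R_iff T by auto
    have norm: "g ** s ** matrix_inv g \<in> sym_group M" if g: "g \<in> rev_group M" and s: "s \<in> sym_group M" for g s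
    proof -
      have gi: "invertible g" and si: "invertible s" and sM: "s ** M = M ** s" using g s R_iff S_iff by auto
      have inv: "invertible (g ** s ** matrix_inv g)" using gi si inv_inv invertible_mult by blast
      have sMi: "s ** ?Mi = ?Mi ** s" using inv_comm[OF Mi sM] .
      have "g ** s ** matrix_inv g ** M = M ** (g ** s ** matrix_inv g)"
      proof (cases "g ** M = M ** g")
        case True
        have giM: "matrix_inv g ** M = M ** matrix_inv g" using conj_back[OF gi True[symmetric]] by simp
        have "g ** s ** matrix_inv g ** M = g ** (s ** M) ** matrix_inv g" using giM by (simp add: matrix_mul_assoc giM assoc_ext[OF giM])
        also have "\<dots> = (g ** M) ** s ** matrix_inv g" using sM by (simp add: matrix_mul_assoc sM assoc_ext[OF sM])
        also have "\<dots> = M ** (g ** s ** matrix_inv g)" using True by (simp add: matrix_mul_assoc True assoc_ext[OF True])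
        finally show ?thesis .
      next
        case False
        hence gM: "g ** M = ?Mi ** g" using g R_iff by auto
        have Mg: "M ** g = g ** ?Mi" using swap[OF Mi gM] .
        have giM: "matrix_inv g ** M = ?Mi ** matrix_inv g" using conj_back[OF gi Mg] .
        have "g ** s ** matrix_inv g ** M = g ** (s ** ?Mi) ** matrix_inv g" using giM by (simp add: matrix_mul_assoc giM assoc_ext[OF giM])
        also have "\<dots> = (g ** ?Mi) ** s ** matrix_inv g" using sMi by (simp add: matrix_mul_assoc sMi assoc_ext[OF sMi])
        also have "\<dots> = M ** (g ** s ** matrix_inv g)" using Mg by (simp add: matrix_mul_assoc Mg assoc_ext[OF Mg])
        finally show ?thesis .
      qed
      thus ?thesis using S_iff inv by blast
    qed
    have inter: "sym_group M \<inter> {mat 1, T} = {mat 1}" using I_S TnS by auto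
    have Req: "rev_group M = {s ** h | s h. s \<in> sym_group M \<and> h \<in> {mat 1, T}}"
    proof (intro set_eqI iffI)
      fix g assume g: "g \<in> rev_group M"
      show "g \<in> {s ** h | s h. s \<in> sym_group M \<and> h \<in> {mat 1, T}}"
      proof (cases "g \<in> sym_group M")
        case True
        thus ?thesis by (intro CollectI exI[of _ g] exI[of _ "mat 1"]) simp
      next
        case False
        have gi: "invertible g" using g R_iff by auto
        hence gM: "g ** M = ?Mi ** g" using g False R_iff S_iff by auto
        have Mg: "M ** g = g ** ?Mi" using swap[OF Mi gM] .
        have "g ** T ** M = g ** (T ** M)" by (simp add: matrix_mul_assoc)
        also have "\<dots> = (g ** ?Mi) ** T" using T(3) by (simp add: matrix_mul_assoc T(3) assoc_ext[OF T(3)])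
        also have "\<dots> = M ** (g ** T)" using Mg by (simp add: matrix_mul_assoc Mg assoc_ext[OF Mg])
        finally have "g ** T \<in> sym_group M" using S_iff gi T(1) invertible_mult by blast
        moreover have "g = (g ** T) ** T" using T(2) by (simp add: matrix_mul_assoc T(2) assoc_ext[OF T(2)])
        ultimately show ?thesis by blast
      qed
    next
      fix g assume "g \<in> {s ** h | s h. s \<in> sym_group M \<and> h \<in> {mat 1, T}}"
      then obtain s h where gsh: "g = s ** h" and s: "s \<in> sym_group M" and hh: "h = mat 1 \<or> h = T" by blast
      have si: "invertible s" and sM: "s ** M = M ** s" using s S_iff by auto
      show "g \<in> rev_group M"
      proof (cases "h = mat 1")
        case True thus ?thesis using gsh si sM R_iff by simp
      next
        case False
        hence hT: "h = T" using hh by blast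
        have sMi: "s ** ?Mi = ?Mi ** s" using inv_comm[OF Mi sM] .
        have "s ** T ** M = s ** ?Mi ** T" using T(3) by (simp add: matrix_mul_assoc T(3) assoc_ext[OF T(3)])
        also have "\<dots> = ?Mi ** (s ** T)" using sMi by (simp add: matrix_mul_assoc sMi assoc_ext[OF sMi])
        finally show ?thesis using R_iff gsh hT si T(1) invertible_mult by blast
      qed
    qed
    have "semidirect_C2 (rev_group M) (sym_group M) T"
      unfolding semidirect_C2_def using T(2) TnI TR norm inter Req by blast
    moreover have "T ** M ** matrix_inv T = ?Mi" using conj_iff[OF T(1)] T(3) by blast
    ultimately show ?thesis using T unfolding GL2_def by blast
  qed
  show ?thesis using P1 P2 P3 by blast
qed

end
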